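(* Let $p\geq 1$, $\vec n=(n_1,\dots,n_p)\in\mathbb N_0^p$, $N\in\mathbb N_0$ with $|\vec n|\le N$, and let $\alpha_1,\dots,\alpha_p,\beta,x\in\mathbb R$ be such that all Pochhammer symbols appearing in denominators below are nonzero. Then $$\sum_{l_1=0}^{n_1}\cdots\sum_{l_p=0}^{n_p}\frac{(-N)_{l_1+\cdots+l_p}\,(x)_{l_1+\cdots+l_p}}{(x+\beta+1)_{l_1+\cdots+l_p}}\,C^{l_1,\dots,l_p}_{\vec n}=\frac{(\beta+1)_{|\vec n|}(-N)_{|\vec n|}}{(x+\beta+1)_{|\vec n|}}\prod_{q=1}^p\frac{(\alpha_q-x+1)_{n_q}}{(\alpha_q+\beta+|\vec n|+1)_{n_q}}.$$
   Context: $(a)_m=a(a+1)\cdots(a+m-1)$, $(a)_0=1$; $|\vec n|=n_1+\cdots+n_p$. The coefficients (those of the multiple Hahn type II polynomials) are $$C^{l_1,\dots,l_p}_{\vec n}=\frac{(-N)_{|\vec n|}}{(-N)_{l_1+\cdots+l_p}}\prod_{i=1}^p\frac{(\alpha_i+1)_{n_i}}{(\alpha_i+\beta+|\vec n|+1)_{n_i}}\frac{(-n_i)_{l_i}}{l_i!}\frac{(\alpha_i+\beta+\sum_{k=1}^i n_k+1)_{\sum_{j=i}^p l_j}}{(\alpha_i+1)_{\sum_{j=i}^p l_j}}\prod_{i=1}^{p-1}\frac{(\alpha_i+n_i+1)_{\sum_{j=i+1}^p l_j}}{(\alpha_i+\beta+\sum_{k=1}^i n_k+1)_{\sum_{j=i+1}^p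 l_j}}.$$ *)

theory Defs
  imports Complex_Main "HOL-Library.FuncSet"
begin

text \<open>Multi-indices are functions nat => nat used on the index set {1..p}.
  (a)_m is pochhammer a m; (-N)_m is pochhammer (- real N) m.\<close>

definition hahnC :: "nat \<Rightarrow> nat \<Rightarrow> (nat \<Rightarrow> real) \<Rightarrow> real \<Rightarrow> (nat \<Rightarrow> nat) \<Rightarrow> (nat \<Rightarrow> nat) \<Rightarrow> real" where
  "hahnC p N \<alpha> \<beta> n l =
     pochhammer (- real N) (\<Sum>k=1..p. n k) / pochhammer (- real N) (\<Sum>k=1..p. l k)
     * (\<Prod>i=1..p.
          pochhammer (\<alpha> i + 1) (n i) / pochhammer (\<alpha> i + \<beta> + real (\<Sum>k=1..p. n k) + 1) (n i)
          * (pochhammer (- real (n i)) (l i) / fact (l i))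
          * (pochhammer (\<alpha> i + \<beta> + real (\<Sum>k=1..i. n k) + 1) (\<Sum>j=i..p. l j)
             / pochhammer (\<alpha> i + 1) (\<Sum>j=i..p. l j)))
     * (\<Prod>i=1..p-1.
          pochhammer (\<alpha> i + real (n i) + 1) (\<Sum>j=i+1..p. l j)
          / pochhammer (\<alpha> i + \<beta> + real (\<Sum>k=1..i. n k) + 1) (\<Sum>j=i+1..p. l j))"

end

theory Submission
  imports Defs
begin


lemma vand: "pochhammer ((a::real) + b) n = (\<Sum>k\<le>n. of_nat (n choose k) * pochhammer a k * pochhammer b (n - k))"
  by (rule pochhammer_binomial_sum)

lemma saal_poly:
  fixes a b f :: real
  shows "(\<Sum>k\<le>n. of_nat (n choose k) * pochhammer a k * pochhammer b k
            * pochhammer (f + a + b + of_nat k) (n - k) * pochhammer f (n - k))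
         = pochhammer (f + a) n * pochhammer (f + b) n"
proof -
  define g where "g = (\<lambda>k j. of_nat (n choose k) * of_nat ((n - k) choose j) * pochhammer a k
        * pochhammer b k * pochhammer (b + of_nat k) j * pochhammer f (n - k) * pochhammer (f + a) (n - k - j))"
  have "(\<Sum>k\<le>n. of_nat (n choose k) * pochhammer a k * pochhammer b k
            * pochhammer (f + a + b + of_nat k) (n - k) * pochhammer f (n - k))
      = (\<Sum>k\<le>n. \<Sum>j\<le>n-k. g k j)"
  proof (rule sum.cong[OF refl])
    fix k assume k: "k \<in> {..n}"
    have e: "f + a + b + of_nat k = (b + of_nat k) + (f + a)" by simp
    show "of_nat (n choose k) * pochhammer a k * pochhammer b k
            * pochhammer (f + a + b + of_nat k) (n - k) * pochhammer f (n - k) = (\<Sum>j\<le>n-k. g k j)"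
      unfolding e g_def
      by (subst vand[of "b + of_nat k" "f + a"]) (simp add: sum_distrib_left algebra_simps)
  qed
  also have "\<dots> = (\<Sum>(k,j)\<in>{(i,j). i+j \<le> n}. g k j)"
  proof -
    have "{(i,j). i+j \<le> n} = Sigma {..n} (\<lambda>k. {..n-k})" by auto
    then show ?thesis by (simp add: sum.Sigma)
  qed
  also have "\<dots> = (\<Sum>s\<le>n. \<Sum>k\<le>s. g k (s - k))"
    by (rule sum.triangle_reindex_eq)
  also have "\<dots> = (\<Sum>s\<le>n. of_nat (n choose s) * pochhammer b s * pochhammer (f + a) (n - s)
      * (\<Sum>k\<le>s. of_nat (s choose k) * pochhammer a k * pochhammer f (n - k)))"
  proof (rule sum.cong[OF refl])
    fix s assume s: "s \<in> {..n}"
    show "(\<Sum>k\<le>s. g k (s - k)) = of_nat (n choose s) * pochhammer b s * pochhammer (f + a) (n - s)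
      * (\<Sum>k\<le>s. of_nat (s choose k) * pochhammer a k * pochhammer f (n - k))"
      unfolding sum_distrib_left
    proof (rule sum.cong[OF refl])
      fix k assume k: "k \<in> {..s}"
      have c: "(n choose k) * ((n - k) choose (s - k)) = (n choose s) * (s choose k)"
        using choose_mult[of k s n] k s by (simp add: mult.commute)
      have c': "real (n choose k) * real ((n - k) choose (s - k)) = real (n choose s) * real (s choose k)"
        using arg_cong[OF c, of real] by simp
      have pb: "pochhammer b k * pochhammer (b + of_nat k) (s - k) = pochhammer b s"
        using pochhammer_product'[of b k "s-k"] k by simp
      have nn: "n - k - (s - k) = n - s" using k s by simp
      show "g k (s - k) = of_nat (n choose s) * pochhammer b s * pochhammer (f + a) (n - s)
         * (of_nat (s choose k) * pochhammer a k * pochhammer f (n - k))"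
        unfolding g_def nn pb[symmetric]
        using c' by (simp add: algebra_simps)
    qed
  qed
  also have "\<dots> = (\<Sum>s\<le>n. of_nat (n choose s) * pochhammer b s * pochhammer f (n - s)
      * pochhammer (f + a) n)"
  proof (rule sum.cong[OF refl])
    fix s assume s: "s \<in> {..n}"
    have "(\<Sum>k\<le>s. of_nat (s choose k) * pochhammer a k * pochhammer f (n - k))
        = pochhammer f (n - s) * (\<Sum>k\<le>s. of_nat (s choose k) * pochhammer a k * pochhammer (f + of_nat (n - s)) (s - k))"
      unfolding sum_distrib_left
    proof (rule sum.cong[OF refl])
      fix k assume k: "k \<in> {..s}"
      have "pochhammer f (n - k) = pochhammer f (n - s) * pochhammer (f + of_nat (n - s)) (s - k)"
        using pochhammer_product'[of f "n-s" "s-k"] k s by simp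
      then show "of_nat (s choose k) * pochhammer a k * pochhammer f (n - k) =
         pochhammer f (n - s) * (of_nat (s choose k) * pochhammer a k * pochhammer (f + of_nat (n - s)) (s - k))"
        by simp
    qed
    also have "\<dots> = pochhammer f (n - s) * pochhammer (a + (f + of_nat (n - s))) s"
      by (simp add: vand)
    finally have i: "(\<Sum>k\<le>s. of_nat (s choose k) * pochhammer a k * pochhammer f (n - k))
        = pochhammer f (n - s) * pochhammer (a + (f + of_nat (n - s))) s" .
    have "pochhammer (f + a) n = pochhammer (f + a) (n - s) * pochhammer (a + (f + of_nat (n - s))) s"
      using pochhammer_product'[of "f+a" "n-s" s] s by (simp add: algebra_simps)
    then show "of_nat (n choose s) * pochhammer b s * pochhammer (f + a) (n - s)
      * (\<Sum>k\<le>s. of_nat (s choose k) * pochhammer a k * pochhammer f (n - k))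
      = of_nat (n choose s) * pochhammer b s * pochhammer f (n - s) * pochhammer (f + a) n"
      unfolding i by simp
  qed
  also have "\<dots> = pochhammer (f + a) n * pochhammer (f + b) n"
    by (subst add.commute[of f b], subst vand) (simp add: sum_distrib_left sum_distrib_right algebra_simps)
  finally show ?thesis .
qed

lemma neg_poch_binom: "pochhammer (- real m) k / fact k = (-1)^k * real (m choose k)"
proof -
  have "real (m choose k) = (-1)^k * pochhammer (- real m) k / fact k"
    using binomial_gbinomial[of m k, where 'a=real] gbinomial_pochhammer[of "real m" k] by simp
  then have "(-1)^k * real (m choose k) = ((-1)^k * (-1)^k) * pochhammer (- real m) k / fact k" by simp
  also have "(-1)^k * (-1)^k = (1::real)" by (simp flip: power_add)
  finally show ?thesis by simp
qed

lemma saal: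
  fixes a b c e :: real
  assumes ce: "c + e = 1 + a + b - of_nat m" and c0: "pochhammer c m \<noteq> 0" and e0: "pochhammer e m \<noteq> 0"
  shows "(\<Sum>k\<le>m. pochhammer (- of_nat m) k / fact k * pochhammer a k * pochhammer b k
            / (pochhammer c k * pochhammer e k))
       = (-1)^m * pochhammer (c-a) m * pochhammer (c-b) m / (pochhammer c m * pochhammer e m)"
proof -
  define f where "f = c - a - b"
  have S: "(\<Sum>k\<le>m. of_nat (m choose k) * pochhammer a k * pochhammer b k
            * pochhammer (f + a + b + of_nat k) (m - k) * pochhammer f (m - k))
         = pochhammer (f + a) m * pochhammer (f + b) m" by (rule saal_poly)
  have t: "pochhammer (- of_nat m) k / fact k * pochhammer a k * pochhammer b k
            / (pochhammer c k * pochhammer e k)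
       = (-1)^m / (pochhammer c m * pochhammer e m) * (of_nat (m choose k) * pochhammer a k * pochhammer b k
            * pochhammer (f + a + b + of_nat k) (m - k) * pochhammer f (m - k))" if k: "k \<in> {..m}" for k
  proof -
    have cm: "pochhammer c m = pochhammer c k * pochhammer (c + of_nat k) (m - k)"
      using pochhammer_product'[of c k "m-k"] k by simp
    have em: "pochhammer e m = pochhammer e k * pochhammer (e + of_nat k) (m - k)"
      using pochhammer_product'[of e k "m-k"] k by simp
    have fm: "pochhammer f (m - k) = (-1)^(m-k) * pochhammer (e + of_nat k) (m - k)"
    proof -
      have "f = - (e + of_nat m - 1)" using ce unfolding f_def by simp
      then have "pochhammer f (m - k) = (-1)^(m-k) * pochhammer (e + of_nat m - 1 - of_nat (m-k) + 1) (m - k)"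
        using pochhammer_minus[of "e + of_nat m - 1" "m-k"] by simp
      also have "e + of_nat m - 1 - of_nat (m-k) + 1 = e + of_nat k" using k by (simp add: of_nat_diff)
      finally show ?thesis .
    qed
    have fab: "f + a + b = c" unfolding f_def by simp
    have sg: "(-1::real)^m = (-1)^k * (-1)^(m-k)" using k by (simp flip: power_add)
    have sg2: "(-1::real)^(m-k) * (-1)^(m-k) = 1" by (simp flip: power_add)
    have n1: "pochhammer (c + of_nat k) (m - k) \<noteq> 0" using c0 cm by auto
    have n2: "pochhammer (e + of_nat k) (m - k) \<noteq> 0" using e0 em by auto
    show ?thesis
      unfolding cm em fm fab neg_poch_binom sg
      using n1 n2 sg2
      by (simp add: field_simps)
  qed
  have "(\<Sum>k\<le>m. pochhammer (- of_nat m) k / fact k * pochhammer a k * pochhammer b k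
            / (pochhammer c k * pochhammer e k))
     = (-1)^m / (pochhammer c m * pochhammer e m) * (\<Sum>k\<le>m. of_nat (m choose k) * pochhammer a k * pochhammer b k
            * pochhammer (f + a + b + of_nat k) (m - k) * pochhammer f (m - k))"
    unfolding sum_distrib_left by (rule sum.cong[OF refl]) (rule t)
  also have "\<dots> = (-1)^m / (pochhammer c m * pochhammer e m) * (pochhammer (f + a) m * pochhammer (f + b) m)"
    using S by simp
  also have "\<dots> = (-1)^m * pochhammer (c-a) m * pochhammer (c-b) m / (pochhammer c m * pochhammer e m)"
    unfolding f_def by (simp add: algebra_simps)
  finally show ?thesis .
qed

lemma poch_split: "pochhammer (z::real) (k + L) = pochhammer z L * pochhammer (z + of_nat L) k"
  using pochhammer_product'[of z L k] by (simp add: add.commute)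

lemma poch_nz_split:
  assumes "pochhammer (z::real) (m + L) \<noteq> 0"
  shows "pochhammer z m \<noteq> 0" "pochhammer (z + of_nat m) L \<noteq> 0"
        "pochhammer z L \<noteq> 0" "pochhammer (z + of_nat L) m \<noteq> 0"
  using assms pochhammer_product'[of z m L] pochhammer_product'[of z L m] by (auto simp: add.commute)

lemma stepsum:
  fixes x \<beta> \<alpha> :: real and m L :: nat
  assumes nx: "pochhammer (x+\<beta>+1) (m+L) \<noteq> 0" and na: "pochhammer (\<alpha>+1) (m+L) \<noteq> 0"
    and nb: "pochhammer (\<alpha>+\<beta>+real m+1) L \<noteq> 0"
  shows "(\<Sum>k\<in>{0..m}. pochhammer x (k+L) / pochhammer (x+\<beta>+1) (k+L) *
            (pochhammer (- real m) k / fact k * (pochhammer (\<alpha>+\<beta>+real m+1) (k+L) / pochhammer (\<alpha>+1) (k+L))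
             * (pochhammer (\<alpha>+real m+1) L / pochhammer (\<alpha>+\<beta>+real m+1) L)))
    = pochhammer x L / pochhammer (x+\<beta>+real m+1) L *
        (pochhammer (\<beta>+1) m * pochhammer (\<alpha>-x+1) m / (pochhammer (x+\<beta>+1) m * pochhammer (\<alpha>+1) m))"
proof -
  define a where "a = x + of_nat L"
  define b where "b = \<alpha>+\<beta>+real m+1 + of_nat L"
  define c where "c = x+\<beta>+1 + of_nat L"
  define e where "e = \<alpha>+1 + of_nat L"
  define P where "P = pochhammer x L * pochhammer (\<alpha>+\<beta>+real m+1) L / (pochhammer (x+\<beta>+1) L * pochhammer (\<alpha>+1) L)
     * (pochhammer (\<alpha>+real m+1) L / pochhammer (\<alpha>+\<beta>+real m+1) L)"
  note X = poch_nz_split[OF nx] and A = poch_nz_split[OF na]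
  have c0: "pochhammer c m \<noteq> 0" using X(4) unfolding c_def .
  have e0: "pochhammer e m \<noteq> 0" using A(4) unfolding e_def .
  have ce: "c + e = 1 + a + b - of_nat m" unfolding a_def b_def c_def e_def by simp
  have "(\<Sum>k\<in>{0..m}. pochhammer x (k+L) / pochhammer (x+\<beta>+1) (k+L) *
            (pochhammer (- real m) k / fact k * (pochhammer (\<alpha>+\<beta>+real m+1) (k+L) / pochhammer (\<alpha>+1) (k+L))
             * (pochhammer (\<alpha>+real m+1) L / pochhammer (\<alpha>+\<beta>+real m+1) L)))
      = (\<Sum>k\<le>m. P * (pochhammer (- of_nat m) k / fact k * pochhammer a k * pochhammer b k
            / (pochhammer c k * pochhammer e k)))"
    unfolding atLeast0AtMost P_def a_def b_def c_def e_def poch_split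
    by (rule sum.cong[OF refl]) (simp add: field_simps)
  also have "\<dots> = P * ((-1)^m * pochhammer (c-a) m * pochhammer (c-b) m / (pochhammer c m * pochhammer e m))"
    unfolding sum_distrib_left[symmetric] using saal[OF ce c0 e0] by simp
  also have "\<dots> = pochhammer x L / pochhammer (x+\<beta>+real m+1) L *
        (pochhammer (\<beta>+1) m * pochhammer (\<alpha>-x+1) m / (pochhammer (x+\<beta>+1) m * pochhammer (\<alpha>+1) m))"
  proof -
    have ca: "c - a = \<beta> + 1" unfolding a_def c_def by simp
    have cb: "(-1)^m * pochhammer (c - b) m = pochhammer (\<alpha>-x+1) m"
    proof -
      have "c - b = - (\<alpha> + real m - x)" unfolding b_def c_def by simp
      then have "pochhammer (c - b) m = (-1)^m * pochhammer (\<alpha> + real m - x - of_nat m + 1) m"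
        using pochhammer_minus[of "\<alpha> + real m - x" m] by simp
      moreover have "(-1::real)^m * (-1)^m = 1" by (simp flip: power_add)
      ultimately show ?thesis by (simp add: algebra_simps)
    qed
    have cx: "pochhammer (x+\<beta>+1) L * pochhammer c m = pochhammer (x+\<beta>+1) m * pochhammer (x+\<beta>+real m+1) L"
      using pochhammer_product'[of "x+\<beta>+1" L m] pochhammer_product'[of "x+\<beta>+1" m L]
      unfolding c_def by (simp add: add.commute add.left_commute)
    have ea: "pochhammer (\<alpha>+1) L * pochhammer e m = pochhammer (\<alpha>+1) m * pochhammer (\<alpha>+real m+1) L"
      using pochhammer_product'[of "\<alpha>+1" L m] pochhammer_product'[of "\<alpha>+1" m L]
      unfolding e_def by (simp add: add.commute add.left_commute)
    have X2: "pochhammer (x+\<beta>+real m+1) L \<noteq> 0" using X(2) by (simp add: add.commute add.left_commute)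
    have A2: "pochhammer (\<alpha>+real m+1) L \<noteq> 0" using A(2) by (simp add: add.commute add.left_commute)
    have key: "((-1)^m * pochhammer (c - b) m) * (pochhammer (\<alpha>+1) m * pochhammer (\<alpha>+real m+1) L) * (pochhammer (x+\<beta>+1) m * pochhammer (x+\<beta>+real m+1) L) = pochhammer (\<alpha>-x+1) m * (pochhammer (\<alpha>+1) L * pochhammer e m) * (pochhammer (x+\<beta>+1) L * pochhammer c m)"
      by (simp only: cb ea cx)
    show ?thesis
      unfolding P_def ca
      using key X2 A2 X(1) X(3) A(1) A(3) nb c0 e0
      by (simp add: field_simps)
  qed
  finally show ?thesis .
qed

lemma sum_PiE_insert:
  assumes "a \<notin> S"
  shows "(\<Sum>g\<in>PiE (insert a S) B. h g) = (\<Sum>y\<in>B a. \<Sum>g\<in>PiE S B. h (g(a:=y)))"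
proof -
  have "(\<Sum>g\<in>PiE (insert a S) B. h g) = (\<Sum>z\<in>B a \<times> PiE S B. h ((\<lambda>(y, g). g(a := y)) z))"
    unfolding PiE_insert_eq by (rule sum.reindex[OF inj_combinator[OF assms], unfolded comp_def])
  also have "\<dots> = (\<Sum>y\<in>B a. \<Sum>g\<in>PiE S B. h (g(a:=y)))"
    by (simp add: sum.cartesian_product split_def)
  finally show ?thesis .
qed

context
  fixes p :: nat and n :: "nat \<Rightarrow> nat" and \<alpha> :: "nat \<Rightarrow> real" and x :: real
begin

definition TT where "TT s i = (\<Sum>k=s..i. n k)"
definition LL :: "(nat \<Rightarrow> nat) \<Rightarrow> nat \<Rightarrow> nat" where "LL l i = (\<Sum>j=i..p. l j)"
definition FF where "FF s \<beta> l i = pochhammer (- real (n i)) (l i) / fact (l i)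
   * (pochhammer (\<alpha> i + \<beta> + real (TT s i) + 1) (LL l i) / pochhammer (\<alpha> i + 1) (LL l i))
   * (pochhammer (\<alpha> i + real (n i) + 1) (LL l (Suc i)) / pochhammer (\<alpha> i + \<beta> + real (TT s i) + 1) (LL l (Suc i)))"
definition GG where "GG s \<beta> l = pochhammer x (LL l s) / pochhammer (x+\<beta>+1) (LL l s) * (\<Prod>i=s..p. FF s \<beta> l i)"

lemma gen:
  "s \<le> Suc p \<Longrightarrow> pochhammer (x+\<beta>+1) (LL n s) \<noteq> 0 \<Longrightarrow>
   (\<forall>i\<in>{s..p}. pochhammer (\<alpha> i+1) (LL n i) \<noteq> 0 \<and> pochhammer (\<alpha> i + \<beta> + real (TT s i) + 1) (LL n (Suc i)) \<noteq> 0) \<Longrightarrow>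
   (\<Sum>l\<in>PiE {s..p} (\<lambda>j. {0..n j}). GG s \<beta> l)
   = pochhammer (\<beta>+1) (LL n s) / pochhammer (x+\<beta>+1) (LL n s) *
     (\<Prod>q=s..p. pochhammer (\<alpha> q - x + 1) (n q) / pochhammer (\<alpha> q + 1) (n q))"
proof (induction "Suc p - s" arbitrary: s \<beta>)
  case 0
  then have s: "s = Suc p" by simp
  show ?case using s by (simp add: GG_def LL_def)
next
  case (Suc d)
  then have sp: "s \<le> p" by simp
  define m where "m = n s"
  define \<beta>' where "\<beta>' = \<beta> + real m"
  have ins: "{s..p} = insert s {Suc s..p}" "s \<notin> {Suc s..p}" using sp by auto
  have LLs: "LL l s = l s + LL l (Suc s)" for l unfolding LL_def using sp by (simp add: sum.atLeast_Suc_atMost)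
  have LLupd: "LL (l(s:=k)) i = LL l i" if "i > s" for l k i
    unfolding LL_def using that by (intro sum.cong) auto
  have TTs: "TT s i = n s + TT (Suc s) i" if "i \<ge> s" for i
    unfolding TT_def using that by (simp add: sum.atLeast_Suc_atMost)
  define K where "K = pochhammer (\<beta>+1) m * pochhammer (\<alpha> s - x + 1) m / (pochhammer (x+\<beta>+1) m * pochhammer (\<alpha> s + 1) m)"
  define W where "W = (\<lambda>k L. pochhammer x (k+L) / pochhammer (x+\<beta>+1) (k+L) *
            (pochhammer (- real m) k / fact k * (pochhammer (\<alpha> s+\<beta>+real m+1) (k+L) / pochhammer (\<alpha> s+1) (k+L))
             * (pochhammer (\<alpha> s+real m+1) L / pochhammer (\<alpha> s+\<beta>+real m+1) L)))"
  define R where "R = (\<lambda>l'. \<Prod>i=Suc s..p. FF (Suc s) \<beta>' l' i)"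
  have claim: "GG s \<beta> (l'(s:=k)) = W k (LL l' (Suc s)) * R l'" for l' k
  proof -
    have "(\<Prod>i=s..p. FF s \<beta> (l'(s:=k)) i) = FF s \<beta> (l'(s:=k)) s * (\<Prod>i=Suc s..p. FF s \<beta> (l'(s:=k)) i)"
      unfolding ins by simp
    also have "(\<Prod>i=Suc s..p. FF s \<beta> (l'(s:=k)) i) = R l'"
      unfolding R_def
    proof (rule prod.cong[OF refl])
      fix i assume i: "i \<in> {Suc s..p}"
      have e: "\<alpha> i + \<beta> + real (TT s i) + 1 = \<alpha> i + \<beta>' + real (TT (Suc s) i) + 1"
        using TTs[of i] i unfolding \<beta>'_def m_def by simp
      show "FF s \<beta> (l'(s:=k)) i = FF (Suc s) \<beta>' l' i"
        unfolding FF_def e using i LLupd[of i l' k] LLupd[of "Suc i" l' k] by simp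
    qed
    finally have P: "(\<Prod>i=s..p. FF s \<beta> (l'(s:=k)) i) = FF s \<beta> (l'(s:=k)) s * R l'" .
    have TT0: "TT s s = m" unfolding TT_def m_def by simp
    have L1: "LL (l'(s:=k)) s = k + LL l' (Suc s)"
      using LLs[of "l'(s:=k)"] LLupd[of "Suc s" l' k, OF lessI] by simp
    show ?thesis
      unfolding GG_def P W_def
      unfolding FF_def TT0 L1 LLupd[of "Suc s" l' k, OF lessI]
      by (simp add: m_def)
  qed
  have box: "LL l' (Suc s) \<le> LL n (Suc s)" if "l' \<in> PiE {Suc s..p} (\<lambda>j. {0..n j})" for l'
    unfolding LL_def using that by (intro sum_mono) auto
  have H1: "pochhammer (x+\<beta>+1) (m + LL n (Suc s)) \<noteq> 0" using Suc.prems(2) LLs[of n] m_def by simp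
  have hs: "pochhammer (\<alpha> s+1) (LL n s) \<noteq> 0 \<and> pochhammer (\<alpha> s + \<beta> + real (TT s s) + 1) (LL n (Suc s)) \<noteq> 0"
    using Suc.prems(3) sp by auto
  have H2: "pochhammer (\<alpha> s+1) (m + LL n (Suc s)) \<noteq> 0" using hs LLs[of n] m_def by simp
  have H3: "pochhammer (\<alpha> s+\<beta>+real m+1) (LL n (Suc s)) \<noteq> 0" using hs unfolding TT_def m_def by simp
  have inner: "(\<Sum>k\<in>{0..n s}. GG s \<beta> (l'(s:=k))) = K * GG (Suc s) \<beta>' l'"
    if l': "l' \<in> PiE {Suc s..p} (\<lambda>j. {0..n j})" for l'
  proof -
    let ?L = "LL l' (Suc s)"
    have le: "m + ?L \<le> m + LL n (Suc s)" using box[OF l'] by simp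
    have "(\<Sum>k\<in>{0..n s}. GG s \<beta> (l'(s:=k))) = (\<Sum>k\<in>{0..m}. W k ?L) * R l'"
      unfolding claim sum_distrib_right m_def ..
    also have "(\<Sum>k\<in>{0..m}. W k ?L) = pochhammer x ?L / pochhammer (x+\<beta>+real m+1) ?L * K"
      unfolding W_def K_def
      by (rule stepsum[OF pochhammer_neq_0_mono[OF H1 le] pochhammer_neq_0_mono[OF H2 le]
              pochhammer_neq_0_mono[OF H3 box[OF l']]])
    finally show ?thesis unfolding GG_def R_def \<beta>'_def by (simp add: algebra_simps)
  qed
  have "(\<Sum>l\<in>PiE {s..p} (\<lambda>j. {0..n j}). GG s \<beta> l)
      = (\<Sum>k\<in>{0..n s}. \<Sum>l'\<in>PiE {Suc s..p} (\<lambda>j. {0..n j}). GG s \<beta> (l'(s:=k)))"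
    unfolding ins(1) by (rule sum_PiE_insert[OF ins(2)])
  also have "\<dots> = (\<Sum>l'\<in>PiE {Suc s..p} (\<lambda>j. {0..n j}). \<Sum>k\<in>{0..n s}. GG s \<beta> (l'(s:=k)))"
    by (rule sum.swap)
  also have "\<dots> = K * (\<Sum>l'\<in>PiE {Suc s..p} (\<lambda>j. {0..n j}). GG (Suc s) \<beta>' l')"
    unfolding sum_distrib_left by (rule sum.cong[OF refl]) (rule inner)
  also have "(\<Sum>l'\<in>PiE {Suc s..p} (\<lambda>j. {0..n j}). GG (Suc s) \<beta>' l') =
     pochhammer (\<beta>'+1) (LL n (Suc s)) / pochhammer (x+\<beta>'+1) (LL n (Suc s)) *
     (\<Prod>q=Suc s..p. pochhammer (\<alpha> q - x + 1) (n q) / pochhammer (\<alpha> q + 1) (n q))"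
  proof (rule Suc.hyps)
    show "d = Suc p - Suc s" using Suc.hyps(2) by simp
    show "Suc s \<le> Suc p" using sp by simp
    show "pochhammer (x + \<beta>' + 1) (LL n (Suc s)) \<noteq> 0"
      using poch_nz_split(2)[OF H1] unfolding \<beta>'_def by (simp add: algebra_simps)
    show "\<forall>i\<in>{Suc s..p}. pochhammer (\<alpha> i + 1) (LL n i) \<noteq> 0 \<and>
        pochhammer (\<alpha> i + \<beta>' + real (TT (Suc s) i) + 1) (LL n (Suc i)) \<noteq> 0"
    proof
      fix i assume i: "i \<in> {Suc s..p}"
      have e: "\<alpha> i + \<beta> + real (TT s i) + 1 = \<alpha> i + \<beta>' + real (TT (Suc s) i) + 1"
        using TTs[of i] i unfolding \<beta>'_def m_def by simp
      show "pochhammer (\<alpha> i + 1) (LL n i) \<noteq> 0 \<and>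
        pochhammer (\<alpha> i + \<beta>' + real (TT (Suc s) i) + 1) (LL n (Suc i)) \<noteq> 0"
        using Suc.prems(3) i unfolding e[symmetric] by auto
    qed
  qed
  also have "K * (pochhammer (\<beta>'+1) (LL n (Suc s)) / pochhammer (x+\<beta>'+1) (LL n (Suc s)) *
     (\<Prod>q=Suc s..p. pochhammer (\<alpha> q - x + 1) (n q) / pochhammer (\<alpha> q + 1) (n q)))
     = pochhammer (\<beta>+1) (LL n s) / pochhammer (x+\<beta>+1) (LL n s) *
     (\<Prod>q=s..p. pochhammer (\<alpha> q - x + 1) (n q) / pochhammer (\<alpha> q + 1) (n q))"
  proof -
    have b1: "pochhammer (\<beta>+1) (LL n s) = pochhammer (\<beta>+1) m * pochhammer (\<beta>'+1) (LL n (Suc s))"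
      unfolding LLs[of n] m_def[symmetric] pochhammer_product' \<beta>'_def by (simp add: algebra_simps)
    have b2: "pochhammer (x+\<beta>+1) (LL n s) = pochhammer (x+\<beta>+1) m * pochhammer (x+\<beta>'+1) (LL n (Suc s))"
      unfolding LLs[of n] m_def[symmetric] pochhammer_product' \<beta>'_def by (simp add: algebra_simps)
    show ?thesis unfolding b1 b2 K_def ins(1) using ins(2) by (simp add: m_def ac_simps)
  qed
  finally show ?case .
qed
end
lemma gen1:
  assumes "pochhammer (x+\<beta>+1) (\<Sum>k=1..p. n k) \<noteq> 0"
    and "\<And>i. i \<in> {1..p} \<Longrightarrow> pochhammer (\<alpha> i+1) (\<Sum>j=i..p. n j) \<noteq> 0 \<and>
        pochhammer (\<alpha> i + \<beta> + real (\<Sum>k=1..i. n k) + 1) (\<Sum>j=Suc i..p. n j) \<noteq> 0"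
  shows "(\<Sum>l\<in>PiE {1..p} (\<lambda>j. {0..n j}).
      pochhammer x (\<Sum>j=1..p. l j) / pochhammer (x+\<beta>+1) (\<Sum>j=1..p. l j) *
      (\<Prod>i=1..p. pochhammer (- real (n i)) (l i) / fact (l i)
       * (pochhammer (\<alpha> i + \<beta> + real (\<Sum>k=1..i. n k) + 1) (\<Sum>j=i..p. l j) / pochhammer (\<alpha> i + 1) (\<Sum>j=i..p. l j))
       * (pochhammer (\<alpha> i + real (n i) + 1) (\<Sum>j=Suc i..p. l j) / pochhammer (\<alpha> i + \<beta> + real (\<Sum>k=1..i. n k) + 1) (\<Sum>j=Suc i..p. l j))))
    = pochhammer (\<beta>+1) (\<Sum>k=1..p. n k) / pochhammer (x+\<beta>+1) (\<Sum>k=1..p. n k) *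
     (\<Prod>q=1..p. pochhammer (\<alpha> q - x + 1) (n q) / pochhammer (\<alpha> q + 1) (n q))"
  using gen[where s=1 and \<beta>=\<beta>] assms unfolding GG_def FF_def LL_def TT_def by auto




theorem mainTheorem1:
  fixes p N :: nat and n :: "nat \<Rightarrow> nat" and \<alpha> :: "nat \<Rightarrow> real" and \<beta> x :: real
  assumes "p \<ge> 1"
    and "(\<Sum>k=1..p. n k) \<le> N"
    and "\<And>i. i \<in> {1..p} \<Longrightarrow>
           pochhammer (\<alpha> i + \<beta> + real (\<Sum>k=1..p. n k) + 1) (n i) \<noteq> 0"
    and "\<And>l i. l \<in> (PiE {1..p} (\<lambda>j. {0..n j})) \<Longrightarrow> i \<in> {1..p} \<Longrightarrow>
           pochhammer (\<alpha> i + \<beta> + real (\<Sum>k=1..i. n k) + 1) (\<Sum>j=i..p. l j) \<noteq> 0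
         \<and> pochhammer (\<alpha> i + 1) (\<Sum>j=i..p. l j) \<noteq> 0
         \<and> pochhammer (\<alpha> i + \<beta> + real (\<Sum>k=1..i. n k) + 1) (\<Sum>j=i+1..p. l j) \<noteq> 0"
    and "\<And>l. l \<in> (PiE {1..p} (\<lambda>j. {0..n j})) \<Longrightarrow>
           pochhammer (- real N) (\<Sum>k=1..p. l k) \<noteq> 0
         \<and> pochhammer (x + \<beta> + 1) (\<Sum>k=1..p. l k) \<noteq> 0"
    and "pochhammer (x + \<beta> + 1) (\<Sum>k=1..p. n k) \<noteq> 0"
  shows "(\<Sum>l\<in>(PiE {1..p} (\<lambda>j. {0..n j})).
            pochhammer (- real N) (\<Sum>k=1..p. l k) * pochhammer x (\<Sum>k=1..p. l k)
            / pochhammer (x + \<beta> + 1) (\<Sum>k=1..p. l k) * hahnC p N \<alpha> \<beta> n l)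
       = pochhammer (\<beta> + 1) (\<Sum>k=1..p. n k) * pochhammer (- real N) (\<Sum>k=1..p. n k)
           / pochhammer (x + \<beta> + 1) (\<Sum>k=1..p. n k)
         * (\<Prod>q=1..p. pochhammer (\<alpha> q - x + 1) (n q)
                        / pochhammer (\<alpha> q + \<beta> + real (\<Sum>k=1..p. n k) + 1) (n q))"
  proof -
  let ?S = "\<lambda>l::nat\<Rightarrow>nat. \<Sum>k=1..p. l k"
  let ?box = "PiE {1..p} (\<lambda>j. {0..n j})"
  define A where "A = (\<Prod>i=1..p. pochhammer (\<alpha> i + 1) (n i) / pochhammer (\<alpha> i + \<beta> + real (?S n) + 1) (n i))"
  define B where "B = (\<lambda>l i. pochhammer (- real (n i)) (l i) / fact (l i)
       * (pochhammer (\<alpha> i + \<beta> + real (\<Sum>k=1..i. n k) + 1) (\<Sum>j=i..p. l j) / pochhammer (\<alpha> i + 1) (\<Sum>j=i..p. l j))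
       * (pochhammer (\<alpha> i + real (n i) + 1) (\<Sum>j=Suc i..p. l j) / pochhammer (\<alpha> i + \<beta> + real (\<Sum>k=1..i. n k) + 1) (\<Sum>j=Suc i..p. l j)))"
  have nbox: "restrict n {1..p} \<in> ?box" by auto
  have rs: "(\<Sum>j=a..p. restrict n {1..p} j) = (\<Sum>j=a..p. n j)" if "a \<ge> 1" for a
    using that by (intro sum.cong) auto
  have H: "pochhammer (\<alpha> i+1) (\<Sum>j=i..p. n j) \<noteq> 0 \<and>
        pochhammer (\<alpha> i + \<beta> + real (\<Sum>k=1..i. n k) + 1) (\<Sum>j=Suc i..p. n j) \<noteq> 0" if i: "i \<in> {1..p}" for i
    using assms(4)[OF nbox i] rs[of i] rs[of "Suc i"] i by simp
  have G: "(\<Sum>l\<in>?box. pochhammer x (\<Sum>j=1..p. l j) / pochhammer (x+\<beta>+1) (\<Sum>j=1..p. l j) * (\<Prod>i=1..p. B l i))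
    = pochhammer (\<beta>+1) (?S n) / pochhammer (x+\<beta>+1) (?S n) *
     (\<Prod>q=1..p. pochhammer (\<alpha> q - x + 1) (n q) / pochhammer (\<alpha> q + 1) (n q))"
    unfolding B_def by (rule gen1[OF assms(6) H])
  have summ: "pochhammer (- real N) (?S l) * pochhammer x (?S l) / pochhammer (x + \<beta> + 1) (?S l) * hahnC p N \<alpha> \<beta> n l
     = pochhammer (- real N) (?S n) * A * (pochhammer x (?S l) / pochhammer (x+\<beta>+1) (?S l) * (\<Prod>i=1..p. B l i))"
    if l: "l \<in> ?box" for l
  proof -
    define C where "C = (\<lambda>i. pochhammer (\<alpha> i + real (n i) + 1) (\<Sum>j=i+1..p. l j)
          / pochhammer (\<alpha> i + \<beta> + real (\<Sum>k=1..i. n k) + 1) (\<Sum>j=i+1..p. l j))"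
    define D where "D = (\<lambda>i. pochhammer (- real (n i)) (l i) / fact (l i)
          * (pochhammer (\<alpha> i + \<beta> + real (\<Sum>k=1..i. n k) + 1) (\<Sum>j=i..p. l j)
             / pochhammer (\<alpha> i + 1) (\<Sum>j=i..p. l j)))"
    have pm: "(\<Prod>i=1..p-1. C i) = (\<Prod>i=1..p. C i)"
    proof -
      have "{1..p} = insert p {1..p-1}" "p \<notin> {1..p-1}" using assms(1) by auto
      moreover have "C p = 1" unfolding C_def by simp
      ultimately show ?thesis by simp
    qed
    have BCD: "B l i = D i * C i" for i unfolding B_def C_def D_def by simp
    have N0: "pochhammer (- real N) (?S l) \<noteq> 0" using assms(5)[OF l] by simp
    have "hahnC p N \<alpha> \<beta> n l = pochhammer (- real N) (?S n) / pochhammer (- real N) (?S l)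
        * (\<Prod>i=1..p. pochhammer (\<alpha> i + 1) (n i) / pochhammer (\<alpha> i + \<beta> + real (?S n) + 1) (n i) * D i)
        * (\<Prod>i=1..p-1. C i)"
      unfolding hahnC_def C_def D_def by (simp add: mult.assoc)
    also have "\<dots> = pochhammer (- real N) (?S n) / pochhammer (- real N) (?S l) * A * (\<Prod>i=1..p. B l i)"
      unfolding pm A_def BCD prod.distrib by (simp add: mult.assoc)
    finally show ?thesis using N0 by (simp add: field_simps)
  qed
  have "(\<Sum>l\<in>?box. pochhammer (- real N) (?S l) * pochhammer x (?S l) / pochhammer (x + \<beta> + 1) (?S l) * hahnC p N \<alpha> \<beta> n l)
     = pochhammer (- real N) (?S n) * A * (\<Sum>l\<in>?box. pochhammer x (?S l) / pochhammer (x+\<beta>+1) (?S l) * (\<Prod>i=1..p. B l i))"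
    unfolding sum_distrib_left by (rule sum.cong[OF refl]) (rule summ)
  also have "\<dots> = pochhammer (- real N) (?S n) * A * (pochhammer (\<beta>+1) (?S n) / pochhammer (x+\<beta>+1) (?S n) *
     (\<Prod>q=1..p. pochhammer (\<alpha> q - x + 1) (n q) / pochhammer (\<alpha> q + 1) (n q)))"
    using G by simp
  also have "A * (\<Prod>q=1..p. pochhammer (\<alpha> q - x + 1) (n q) / pochhammer (\<alpha> q + 1) (n q))
      = (\<Prod>q=1..p. pochhammer (\<alpha> q - x + 1) (n q) / pochhammer (\<alpha> q + \<beta> + real (?S n) + 1) (n q))"
    unfolding A_def prod.distrib[symmetric]
  proof (rule prod.cong[OF refl])
    fix q assume q: "q \<in> {1..p}"
    have "pochhammer (\<alpha> q + 1) (\<Sum>j=q..p. n j) \<noteq> 0" using H[OF q] by simp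
    moreover have "n q \<le> (\<Sum>j=q..p. n j)" using q by (intro member_le_sum) auto
    ultimately have "pochhammer (\<alpha> q + 1) (n q) \<noteq> 0" by (rule pochhammer_neq_0_mono)
    then show "pochhammer (\<alpha> q + 1) (n q) / pochhammer (\<alpha> q + \<beta> + real (?S n) + 1) (n q) *
        (pochhammer (\<alpha> q - x + 1) (n q) / pochhammer (\<alpha> q + 1) (n q)) =
        pochhammer (\<alpha> q - x + 1) (n q) / pochhammer (\<alpha> q + \<beta> + real (?S n) + 1) (n q)"
      by (simp add: field_simps)
  qed
  ultimately show ?thesis by (simp add: algebra_simps)
qed

end
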